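(* Every interbank lending game $G=(m,n,\boldsymbol{c},\boldsymbol{d},r_{\max},r_{\min})$ has a unique pure Nash equilibrium.
   Context: An interbank lending game $G=(m,n,\boldsymbol{c},\boldsymbol{d},r_{\max},r_{\min})$ consists of positive integers $m,n$, budgets $\boldsymbol{c}\in\mathbb{R}_{>0}^m$, demands $\boldsymbol{d}\in\mathbb{R}_{>0}^n$ and reals $0<r_{\min}<r_{\max}$. The players are the lenders $L=\{1,\dots,m\}$; $B=\{1,\dots,n\}$ is the set of borrowers. Lender $i$'s strategy set is $S_i=\{s_i\in\mathbb{R}_{\ge0}^n:\sum_{j\in B}s_{ij}\le c_i\}$, the strategy space is $\boldsymbol{S}=\prod_{i\in L}S_i$ with elements $\boldsymbol{s}=(s_{ij})_{i\in L,j\in B}$. The interest rate of borrower $j$ is $r_j(\boldsymbol{s})=(r_{\min}-r_{\max})\frac{\sum_{i\in L}s_{ij}}{d_j}+r_{\max}$ and lender $i$'s utility is $u_i(\boldsymbol{s})=\sum_{j\in B}(r_j(\boldsymbol{s})-r_{\min})s_{ij}$. A pure Nash equilibrium is a profile $\boldsymbol{s}^*\in\boldsymbol{S}$ such that $u_i(\boldsymbol{s}^* )\ge u_i(s_i,\boldsymbol{s}^*_{-i})$ for every $i\in L$ and every $s_i\in S_i$, where $(s_i,\boldsymbol{s}^*_{-i})$ denotes $\boldsymbol{s}^*$ with lender $i$'s strategy replaced by $s_i$. *)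

theory Defs
  imports "HOL-Analysis.Analysis"
begin

text \<open>Lenders are indexed by {0..<m}, borrowers by {0..<n}. A profile is
  s :: nat \<Rightarrow> nat \<Rightarrow> real with s i j the amount lender i lends to borrower j;
  entries outside the index ranges are required to be 0 (canonical representation).\<close>

definition strategy :: "nat \<Rightarrow> real \<Rightarrow> (nat \<Rightarrow> real) \<Rightarrow> bool" where
  "strategy n c_i si \<longleftrightarrow> (\<forall>j<n. si j \<ge> 0) \<and> (\<forall>j\<ge>n. si j = 0) \<and> (\<Sum>j<n. si j) \<le> c_i"

definition profile_space :: "nat \<Rightarrow> nat \<Rightarrow> (nat \<Rightarrow> real) \<Rightarrow> (nat \<Rightarrow> nat \<Rightarrow> real) set" where
  "profile_space m n c = {s. (\<forall>i<m. strategy n (c i) (s i)) \<and> (\<forall>i\<ge>m. \<forall>j. s i j = 0)}"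

definition interest_rate :: "nat \<Rightarrow> (nat \<Rightarrow> real) \<Rightarrow> real \<Rightarrow> real \<Rightarrow> (nat \<Rightarrow> nat \<Rightarrow> real) \<Rightarrow> nat \<Rightarrow> real" where
  "interest_rate m d rmax rmin s j = (rmin - rmax) * (\<Sum>i<m. s i j) / d j + rmax"

definition utility :: "nat \<Rightarrow> nat \<Rightarrow> (nat \<Rightarrow> real) \<Rightarrow> real \<Rightarrow> real \<Rightarrow> (nat \<Rightarrow> nat \<Rightarrow> real) \<Rightarrow> nat \<Rightarrow> real" where
  "utility m n d rmax rmin s i = (\<Sum>j<n. (interest_rate m d rmax rmin s j - rmin) * s i j)"

definition pure_nash :: "nat \<Rightarrow> nat \<Rightarrow> (nat \<Rightarrow> real) \<Rightarrow> (nat \<Rightarrow> real) \<Rightarrow> real \<Rightarrow> real \<Rightarrow> (nat \<Rightarrow> nat \<Rightarrow> real) \<Rightarrow> bool" where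
  "pure_nash m n c d rmax rmin s \<longleftrightarrow> s \<in> profile_space m n c \<and>
     (\<forall>i<m. \<forall>si. strategy n (c i) si \<longrightarrow>
        utility m n d rmax rmin s i \<ge> utility m n d rmax rmin (s(i := si)) i)"

end

theory Submission
  imports Defs
begin

definition Ssum :: "nat \<Rightarrow> (nat \<Rightarrow> nat \<Rightarrow> real) \<Rightarrow> nat \<Rightarrow> real" where
  "Ssum m s j = (\<Sum>k<m. s k j)"

definition Dlt :: "nat \<Rightarrow> nat \<Rightarrow> (nat \<Rightarrow> real) \<Rightarrow> real \<Rightarrow> (nat \<Rightarrow> nat \<Rightarrow> real) \<Rightarrow> nat \<Rightarrow> (nat \<Rightarrow> real) \<Rightarrow> real" where
  "Dlt m n d a s i y = (\<Sum>j<n. (y j - s i j) * (a - a * (Ssum m s j + s i j) / d j) - a * (y j - s i j)^2 / d j)"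

definition Pot :: "nat \<Rightarrow> nat \<Rightarrow> (nat \<Rightarrow> real) \<Rightarrow> real \<Rightarrow> (nat \<Rightarrow> nat \<Rightarrow> real) \<Rightarrow> real" where
  "Pot m n d a s = (\<Sum>j<n. a * Ssum m s j - (a / (2 * d j)) * ((Ssum m s j)^2 + (\<Sum>k<m. (s k j)^2)))"

lemma upd_sum_gen:
  fixes f :: "nat \<Rightarrow> real"
  assumes "i < m"
  shows "(\<Sum>k<m. (f(i:=v)) k) = (\<Sum>k<m. f k) - f i + v"
proof -
  have "(\<Sum>k<m. (f(i:=v)) k) = (f(i:=v)) i + (\<Sum>k\<in>{..<m}-{i}. (f(i:=v)) k)"
    by (rule sum.remove) (use assms in auto)
  also have "(\<Sum>k\<in>{..<m}-{i}. (f(i:=v)) k) = (\<Sum>k\<in>{..<m}-{i}. f k)"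
    by (rule sum.cong) auto
  also have "(\<Sum>k<m. f k) = f i + (\<Sum>k\<in>{..<m}-{i}. f k)"
    by (rule sum.remove) (use assms in auto)
  ultimately show ?thesis by simp
qed

lemma upd_Ssum:
  fixes i m :: nat
  assumes "i < m"
  shows "Ssum m (s(i:=y)) j = Ssum m s j - s i j + y j"
proof -
  have eq: "(\<Sum>k<m. (s(i:=y)) k j) = (\<Sum>k<m. ((\<lambda>k. s k j)(i := y j)) k)" by (rule sum.cong) auto
  show ?thesis unfolding Ssum_def eq by (rule upd_sum_gen[OF assms])
qed

lemma upd_sq:
  fixes i m :: nat and s :: "nat \<Rightarrow> nat \<Rightarrow> real"
  assumes "i < m"
  shows "(\<Sum>k<m. ((s(i:=y)) k j)^2) = (\<Sum>k<m. (s k j)^2) - (s i j)^2 + (y j)^2"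
proof -
  have eq: "(\<Sum>k<m. ((s(i:=y)) k j)^2) = (\<Sum>k<m. ((\<lambda>k. (s k j)^2)(i := (y j)^2)) k)" by (rule sum.cong) auto
  show ?thesis unfolding eq by (rule upd_sum_gen[OF assms])
qed

lemma util_diff:
  assumes "i < m" and d: "\<forall>j<n. d j > 0"
  shows "utility m n d rmax rmin (s(i:=y)) i - utility m n d rmax rmin s i
       = Dlt m n d (rmax - rmin) s i y"
proof -
  have "utility m n d rmax rmin (s(i:=y)) i - utility m n d rmax rmin s i
     = (\<Sum>j<n. ((rmin - rmax) * (Ssum m s j - s i j + y j) / d j + rmax - rmin) * y j
              - ((rmin - rmax) * Ssum m s j / d j + rmax - rmin) * s i j)"
    unfolding utility_def interest_rate_def sum_subtractf[symmetric]
    using upd_Ssum[OF assms(1), of s y] unfolding Ssum_def by simp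
  also have "\<dots> = Dlt m n d (rmax - rmin) s i y"
    unfolding Dlt_def
  proof (rule sum.cong)
    fix j assume "j \<in> {..<n}"
    then have "d j \<noteq> 0" using d by force
    then show "((rmin - rmax) * (Ssum m s j - s i j + y j) / d j + rmax - rmin) * y j
              - ((rmin - rmax) * Ssum m s j / d j + rmax - rmin) * s i j
      = (y j - s i j) * ((rmax - rmin) - (rmax - rmin) * (Ssum m s j + s i j) / d j) - (rmax - rmin) * (y j - s i j)^2 / d j"
      by (simp add: field_simps power2_eq_square)
  qed simp
  finally show ?thesis .
qed

lemma pot_diff:
  assumes "i < m" and d: "\<forall>j<n. d j > 0"
  shows "Pot m n d a (s(i:=y)) - Pot m n d a s = Dlt m n d a s i y"
proof -
  have "Pot m n d a (s(i:=y)) - Pot m n d a s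
     = (\<Sum>j<n. (a * (Ssum m s j - s i j + y j) - (a / (2 * d j)) * ((Ssum m s j - s i j + y j)^2
            + ((\<Sum>k<m. (s k j)^2) - (s i j)^2 + (y j)^2)))
         - (a * Ssum m s j - (a / (2 * d j)) * ((Ssum m s j)^2 + (\<Sum>k<m. (s k j)^2))))"
    unfolding Pot_def sum_subtractf[symmetric]
    using upd_Ssum[OF assms(1), of s y] upd_sq[OF assms(1), of s y] by simp
  also have "\<dots> = Dlt m n d a s i y"
    unfolding Dlt_def
  proof (rule sum.cong)
    fix j assume "j \<in> {..<n}"
    then have "d j \<noteq> 0" using d by force
    then show "(a * (Ssum m s j - s i j + y j) - (a / (2 * d j)) * ((Ssum m s j - s i j + y j)^2
            + ((\<Sum>k<m. (s k j)^2) - (s i j)^2 + (y j)^2)))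
         - (a * Ssum m s j - (a / (2 * d j)) * ((Ssum m s j)^2 + (\<Sum>k<m. (s k j)^2)))
      = (y j - s i j) * (a - a * (Ssum m s j + s i j) / d j) - a * (y j - s i j)^2 / d j"
      by (simp add: field_simps power2_eq_square)
  qed simp
  finally show ?thesis .
qed

lemma coord_cont [continuous_intros]: "continuous_on A (\<lambda>s::nat\<Rightarrow>nat\<Rightarrow>real. s k j)"
proof -
  have "continuous_on UNIV (\<lambda>s::nat\<Rightarrow>nat\<Rightarrow>real. s k)" by simp
  then have "continuous_on UNIV (\<lambda>s::nat\<Rightarrow>nat\<Rightarrow>real. s k j)"
    by (rule continuous_on_product_then_coordinatewise)
  then show ?thesis by (rule continuous_on_subset) auto
qed

lemma compact_PiU:
  assumes "\<And>i. compact (S i)"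
  shows "compact (PiE UNIV S :: ('a \<Rightarrow> 'b::topological_space) set)"
  using compactin_PiE[of "\<lambda>i. euclidean" UNIV S] assms
  by (simp add: euclidean_product_topology)

definition Kset :: "nat \<Rightarrow> nat \<Rightarrow> (nat \<Rightarrow> real) \<Rightarrow> (nat \<Rightarrow> nat \<Rightarrow> real) set" where
  "Kset m n c = PiE UNIV (\<lambda>i. PiE UNIV (\<lambda>j. {0..(if i < m \<and> j < n then c i else 0)}))"

lemma compact_Kset: "compact (Kset m n c)"
  unfolding Kset_def by (intro compact_PiU compact_Icc)

lemma profile_eq:
  "profile_space m n c = Kset m n c \<inter> (\<Inter>i\<in>{..<m}. {s. (\<Sum>j<n. s i j) \<le> c i})"
proof (intro equalityI subsetI)
  fix s assume s: "s \<in> profile_space m n c"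
  have "s i j \<in> {0..(if i < m \<and> j < n then c i else 0)}" for i j
  proof (cases "i < m \<and> j < n")
    case True
    then have st: "strategy n (c i) (s i)" using s by (auto simp: profile_space_def)
    then have "s i j \<le> (\<Sum>j<n. s i j)"
      using True by (intro member_le_sum) (auto simp: strategy_def)
    then show ?thesis using st True by (auto simp: strategy_def)
  next
    case False
    then show ?thesis using s by (cases "i < m") (auto simp: profile_space_def strategy_def)
  qed
  then show "s \<in> Kset m n c \<inter> (\<Inter>i\<in>{..<m}. {s. (\<Sum>j<n. s i j) \<le> c i})"
    using s by (auto simp: Kset_def PiE_UNIV_domain Pi_iff profile_space_def strategy_def)
next
  fix s assume s: "s \<in> Kset m n c \<inter> (\<Inter>i\<in>{..<m}. {s. (\<Sum>j<n. s i j) \<le> c i})"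
  then have b: "\<And>i j. s i j \<in> {0..(if i < m \<and> j < n then c i else 0)}"
    by (auto simp: Kset_def PiE_UNIV_domain Pi_iff)
  have z: "s i j = 0" if "\<not> (i < m \<and> j < n)" for i j
    using b[of i j] that by auto
  show "s \<in> profile_space m n c"
    unfolding profile_space_def strategy_def
    using s b z by (auto simp: not_less)
qed

lemma compact_profile: "compact (profile_space m n c)"
  unfolding profile_eq
  by (intro compact_Int_closed compact_Kset closed_INT ballI closed_Collect_le continuous_intros)

lemma upd_profile:
  "s \<in> profile_space m n c \<Longrightarrow> i < m \<Longrightarrow> strategy n (c i) y \<Longrightarrow> s(i:=y) \<in> profile_space m n c"
  by (auto simp: profile_space_def)

lemma scalar_lemma:
  fixes g q :: real
  assumes q: "q \<ge> 0" and h: "\<And>t. 0 < t \<Longrightarrow> t \<le> 1 \<Longrightarrow> t * g - t^2 * q \<le> 0"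
  shows "g \<le> 0"
proof (rule ccontr)
  assume "\<not> g \<le> 0"
  then have g: "g > 0" by simp
  show False
  proof (cases "q = 0")
    case True
    then show ?thesis using h[of 1] g by simp
  next
    case False
    then have qp: "q > 0" using q by simp
    define t where "t = min 1 (g / (2*q))"
    have t0: "t > 0" using g qp by (simp add: t_def)
    have t1: "t \<le> 1" by (simp add: t_def)
    have "t * (g - t * q) \<le> 0" using h[OF t0 t1] by (simp add: power2_eq_square algebra_simps)
    then have "g - t * q \<le> 0" using t0 by (simp add: mult_le_0_iff)
    moreover have "t * q \<le> g / (2*q) * q" using qp by (intro mult_right_mono) (auto simp: t_def)
    ultimately show False using g qp by (simp add: field_simps)
  qed
qed

lemma alg2:
  fixes x x' t A a dd :: real
  shows "(x + t * (x' - x) - x) * A - a * (x + t * (x' - x) - x)^2 / dd = t * ((x' - x) * A) - t^2 * (a * (x' - x)^2 / dd)"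
proof -
  have "x + t * (x' - x) - x = t * (x' - x)" by simp
  then show ?thesis by (simp add: power_mult_distrib)
qed

lemma conv_sum:
  fixes f g :: "nat \<Rightarrow> real"
  shows "(\<Sum>j<n. f j + t * (g j - f j)) = (1 - t) * (\<Sum>j<n. f j) + t * (\<Sum>j<n. g j)"
proof -
  have "(\<Sum>j<n. f j + t * (g j - f j)) = (\<Sum>j<n. f j) + t * ((\<Sum>j<n. g j) - (\<Sum>j<n. f j))"
    by (simp add: sum.distrib sum_distrib_left[symmetric] sum_subtractf)
  then show ?thesis by (simp add: algebra_simps)
qed

lemma NE_grad:
  assumes ne: "pure_nash m n c d rmax rmin s" and s': "s' \<in> profile_space m n c" and i: "i < m"
    and d: "\<forall>j<n. d j > 0" and r: "rmin < rmax"
  shows "(\<Sum>j<n. (s' i j - s i j) * ((rmax - rmin) - (rmax - rmin) * (Ssum m s j + s i j) / d j)) \<le> 0"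
proof -
  define a where "a = rmax - rmin"
  have a: "a > 0" using r by (simp add: a_def)
  define A where "A = (\<lambda>j. a - a * (Ssum m s j + s i j) / d j)"
  define g where "g = (\<Sum>j<n. (s' i j - s i j) * A j)"
  define q where "q = (\<Sum>j<n. a * (s' i j - s i j)^2 / d j)"
  have s: "s \<in> profile_space m n c" using ne by (simp add: pure_nash_def)
  have st: "strategy n (c i) (s i)" "strategy n (c i) (s' i)"
    using s s' i by (auto simp: profile_space_def)
  have q0: "q \<ge> 0" unfolding q_def
  proof (rule sum_nonneg)
    fix j assume "j \<in> {..<n}"
    then have "d j > 0" using d by auto
    then show "0 \<le> a * (s' i j - s i j)^2 / d j" using a by simp
  qed
  have "t * g - t^2 * q \<le> 0" if t0: "0 < t" and t1: "t \<le> 1" for t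
  proof -
    define y where "y = (\<lambda>j. s i j + t * (s' i j - s i j))"
    have ystr: "strategy n (c i) y"
      unfolding strategy_def
    proof (intro conjI allI impI)
      fix j assume "j < n"
      then have h: "s i j \<ge> 0" "s' i j \<ge> 0" using st by (auto simp: strategy_def)
      have "0 \<le> (1 - t) * s i j" using h t1 by simp
      moreover have "0 \<le> t * s' i j" using h t0 by simp
      ultimately have "0 \<le> (1 - t) * s i j + t * s' i j" by linarith
      moreover have "y j = (1 - t) * s i j + t * s' i j" by (simp add: y_def algebra_simps)
      ultimately show "0 \<le> y j" by simp
    next
      fix j assume "n \<le> j"
      then show "y j = 0" using st by (auto simp: strategy_def y_def)
    next
      have c1: "(\<Sum>j<n. s i j) \<le> c i" "(\<Sum>j<n. s' i j) \<le> c i" using st by (auto simp: strategy_def)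
      have "(\<Sum>j<n. y j) = (1 - t) * (\<Sum>j<n. s i j) + t * (\<Sum>j<n. s' i j)"
        unfolding y_def by (rule conv_sum)
      also have "\<dots> \<le> (1 - t) * c i + t * c i"
        using c1 t0 t1 by (intro add_mono mult_left_mono) auto
      finally show "(\<Sum>j<n. y j) \<le> c i" by (simp add: algebra_simps)
    qed
    have "utility m n d rmax rmin (s(i:=y)) i \<le> utility m n d rmax rmin s i"
      using ne ystr i unfolding pure_nash_def by blast
    then have "Dlt m n d a s i y \<le> 0" using util_diff[OF i d, of rmax rmin s y] unfolding a_def by linarith
    moreover have "Dlt m n d a s i y = t * g - t^2 * q"
    proof -
      have "Dlt m n d a s i y = (\<Sum>j<n. t * ((s' i j - s i j) * A j) - t^2 * (a * (s' i j - s i j)^2 / d j))"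
        unfolding Dlt_def y_def A_def by (rule sum.cong) (rule refl, rule alg2)
      then show ?thesis unfolding g_def q_def sum_subtractf sum_distrib_left by simp
    qed
    ultimately show ?thesis by simp
  qed
  then have "g \<le> 0" by (rule scalar_lemma[OF q0])
  then show ?thesis unfolding g_def A_def a_def .
qed

lemma NE_in: "pure_nash m n c d rmax rmin s \<Longrightarrow> s \<in> profile_space m n c"
  by (simp add: pure_nash_def)

lemma alg_GG:
  fixes x x' S S' a dd :: real
  assumes "dd \<noteq> 0"
  shows "(x' - x) * (a - a * (S + x) / dd) + (x - x') * (a - a * (S' + x') / dd) =
         a / dd * ((S' - S) * (x' - x) + (x' - x)^2)"
  using assms by (simp add: field_simps power2_eq_square)

lemma uniq:
  assumes ne1: "pure_nash m n c d rmax rmin s" and ne2: "pure_nash m n c d rmax rmin s'"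
    and d: "\<forall>j<n. d j > 0" and r: "rmin < rmax"
  shows "s = s'"
proof -
  define a where "a = rmax - rmin"
  have a: "a > 0" using r by (simp add: a_def)
  define G where "G = (\<lambda>s s' i. (\<Sum>j<n. (s' i j - s i j) * (a - a * (Ssum m s j + s i j) / d j)))"
  have G1: "G s s' i \<le> 0" if "i < m" for i
    unfolding G_def a_def by (rule NE_grad[OF ne1 NE_in[OF ne2] that d r])
  have G2: "G s' s i \<le> 0" if "i < m" for i
    unfolding G_def a_def by (rule NE_grad[OF ne2 NE_in[OF ne1] that d r])
  define D where "D = (\<lambda>j. Ssum m s' j - Ssum m s j)"
  have GG: "G s s' i + G s' s i = (\<Sum>j<n. (a / d j) * (D j * (s' i j - s i j) + (s' i j - s i j)^2))" for i
    unfolding G_def sum.distrib[symmetric]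
  proof (rule sum.cong)
    fix j assume "j \<in> {..<n}"
    then have "d j \<noteq> 0" using d by force
    then show "(s' i j - s i j) * (a - a * (Ssum m s j + s i j) / d j) +
          (s i j - s' i j) * (a - a * (Ssum m s' j + s' i j) / d j) =
          a / d j * (D j * (s' i j - s i j) + (s' i j - s i j)^2)"
      unfolding D_def by (rule alg_GG)
  qed simp
  have Dsum: "(\<Sum>i<m. s' i j - s i j) = D j" for j
    by (simp add: D_def Ssum_def sum_subtractf)
  have "(\<Sum>i<m. G s s' i + G s' s i) = (\<Sum>i<m. \<Sum>j<n. (a / d j) * (D j * (s' i j - s i j) + (s' i j - s i j)^2))"
    using GG by simp
  also have "\<dots> = (\<Sum>j<n. \<Sum>i<m. (a / d j) * (D j * (s' i j - s i j) + (s' i j - s i j)^2))"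
    by (rule sum.swap)
  also have "\<dots> = (\<Sum>j<n. (a / d j) * ((D j)^2 + (\<Sum>i<m. (s' i j - s i j)^2)))"
  proof (rule sum.cong)
    fix j
    have "(\<Sum>i<m. (a / d j) * (D j * (s' i j - s i j) + (s' i j - s i j)^2))
        = (a / d j) * (D j * (\<Sum>i<m. s' i j - s i j) + (\<Sum>i<m. (s' i j - s i j)^2))"
      by (simp only: sum_distrib_left sum.distrib distrib_left)
    then show "(\<Sum>i<m. (a / d j) * (D j * (s' i j - s i j) + (s' i j - s i j)^2))
        = (a / d j) * ((D j)^2 + (\<Sum>i<m. (s' i j - s i j)^2))"
      by (simp add: Dsum power2_eq_square)
  qed simp
  finally have eq: "(\<Sum>i<m. G s s' i + G s' s i) = (\<Sum>j<n. (a / d j) * ((D j)^2 + (\<Sum>i<m. (s' i j - s i j)^2)))" .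
  have le: "(\<Sum>i<m. G s s' i + G s' s i) \<le> 0"
    using G1 G2 by (intro sum_nonpos) (simp add: add_nonpos_nonpos)
  have nn: "\<forall>j\<in>{..<n}. 0 \<le> (a / d j) * ((D j)^2 + (\<Sum>i<m. (s' i j - s i j)^2))"
  proof
    fix j assume "j \<in> {..<n}"
    then have "a / d j \<ge> 0" using a d by auto
    moreover have "(D j)^2 + (\<Sum>i<m. (s' i j - s i j)^2) \<ge> 0" by (intro add_nonneg_nonneg sum_nonneg) auto
    ultimately show "0 \<le> (a / d j) * ((D j)^2 + (\<Sum>i<m. (s' i j - s i j)^2))" by (rule mult_nonneg_nonneg)
  qed
  have "(\<Sum>j<n. (a / d j) * ((D j)^2 + (\<Sum>i<m. (s' i j - s i j)^2))) = 0"
  proof -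
    have "0 \<le> (\<Sum>j<n. (a / d j) * ((D j)^2 + (\<Sum>i<m. (s' i j - s i j)^2)))"
      using nn by (intro sum_nonneg) blast
    then show ?thesis using eq le by linarith
  qed
  then have z: "\<forall>j\<in>{..<n}. (a / d j) * ((D j)^2 + (\<Sum>i<m. (s' i j - s i j)^2)) = 0"
    using nn sum_nonneg_eq_0_iff[of "{..<n}" "\<lambda>j. (a / d j) * ((D j)^2 + (\<Sum>i<m. (s' i j - s i j)^2))"]
    by blast
  have "s i j = s' i j" for i j
  proof (cases "i < m \<and> j < n")
    case True
    then have "a / d j > 0" using a d by auto
    then have "(D j)^2 + (\<Sum>i<m. (s' i j - s i j)^2) = 0" using z True by auto
    moreover have "(D j)^2 \<ge> 0" "(\<Sum>i<m. (s' i j - s i j)^2) \<ge> 0" by (auto intro: sum_nonneg)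
    ultimately have "(\<Sum>i<m. (s' i j - s i j)^2) = 0" by linarith
    then have "\<forall>i\<in>{..<m}. (s' i j - s i j)^2 = 0" by (simp add: sum_nonneg_eq_0_iff)
    then show ?thesis using True by auto
  next
    case False
    then show ?thesis using NE_in[OF ne1] NE_in[OF ne2]
      by (cases "i < m") (auto simp: profile_space_def strategy_def not_less)
  qed
  then show ?thesis by (intro ext)
qed

theorem theorem3p3:
  fixes m n :: nat and c d :: "nat \<Rightarrow> real" and rmax rmin :: real
  assumes "m > 0" and "n > 0"
    and "\<forall>i<m. c i > 0" and "\<forall>j<n. d j > 0"
    and "0 < rmin" and "rmin < rmax"
  shows "\<exists>!s. pure_nash m n c d rmax rmin s"
proof -
  define a where "a = rmax - rmin"
  have ne: "profile_space m n c \<noteq> {}"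
  proof -
    have "(\<lambda>i j. 0::real) \<in> profile_space m n c"
      using assms(3) by (auto simp: profile_space_def strategy_def less_imp_le)
    then show ?thesis by blast
  qed
  have cont: "continuous_on (profile_space m n c) (Pot m n d a)"
    unfolding Pot_def Ssum_def by (intro continuous_intros)
  obtain s0 where s0: "s0 \<in> profile_space m n c"
    and mx: "\<And>y. y \<in> profile_space m n c \<Longrightarrow> Pot m n d a y \<le> Pot m n d a s0"
    using continuous_attains_sup[OF compact_profile ne cont] by blast
  have "pure_nash m n c d rmax rmin s0"
    unfolding pure_nash_def
  proof (intro conjI s0 allI impI)
    fix i si assume i: "i < m" and st: "strategy n (c i) si"
    have "Pot m n d a (s0(i:=si)) \<le> Pot m n d a s0"
      by (rule mx[OF upd_profile[OF s0 i st]])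
    then have "Dlt m n d a s0 i si \<le> 0" using pot_diff[OF i assms(4), of a s0 si] by simp
    then show "utility m n d rmax rmin (s0(i := si)) i \<le> utility m n d rmax rmin s0 i"
      using util_diff[OF i assms(4), of rmax rmin s0 si] by (simp add: a_def)
  qed
  moreover have "\<And>s s'. pure_nash m n c d rmax rmin s \<Longrightarrow> pure_nash m n c d rmax rmin s' \<Longrightarrow> s = s'"
    using uniq assms(4,6) by blast
  ultimately show ?thesis by blast
qed
end
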